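(* Let $T$ be an out-directed tree with $l$ out-leaves. Then there is a symmetric out-directed tree $T'$ such that $T$ is a subgraph of $T'$, $T'$ has at most $l^l$ out-leaves, and $|T'|\le l^l|T|$.
   Context: An out-directed tree is an oriented tree (underlying graph a tree, no bidirected edges) with a root $r$ such that all edges are directed away from $r$. An out-leaf is a vertex of out-degree $0$. An out-directed tree with root $r$ is symmetric if for every $i\ge 0$ all vertices at distance $i$ from $r$ have the same out-degree. $|T|$ is the number of vertices. *)

theory Defs
  imports Main
begin

text \<open>An out-directed tree with root r: every vertex is reachable from r,
r has no in-neighbour and every other vertex has exactly one in-neighbour
(equivalently: underlying graph a tree, all edges directed away from r).\<close>

definition out_tree :: "'a set \<Rightarrow> ('a \<times> 'a) set \<Rightarrow> 'a \<Rightarrow> bool" where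
  "out_tree V E r \<longleftrightarrow>
     finite V \<and> r \<in> V \<and> E \<subseteq> V \<times> V \<and>
     (\<forall>u. (u, r) \<notin> E) \<and>
     (\<forall>v\<in>V. v \<noteq> r \<longrightarrow> (\<exists>!u. (u, v) \<in> E)) \<and>
     (\<forall>v\<in>V. (r, v) \<in> E\<^sup>*)"

definition out_degree :: "('a \<times> 'a) set \<Rightarrow> 'a \<Rightarrow> nat" where
  "out_degree E v = card {w. (v, w) \<in> E}"

definition out_leaves :: "'a set \<Rightarrow> ('a \<times> 'a) set \<Rightarrow> 'a set" where
  "out_leaves V E = {v \<in> V. out_degree E v = 0}"

text \<open>Vertices at distance i from r (in a tree the path from r is unique).\<close>
definition level :: "('a \<times> 'a) set \<Rightarrow> 'a \<Rightarrow> nat \<Rightarrow> 'a set" where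
  "level E r i = {v. (r, v) \<in> E ^^ i}"

definition symmetric_out_tree :: "'a set \<Rightarrow> ('a \<times> 'a) set \<Rightarrow> 'a \<Rightarrow> bool" where
  "symmetric_out_tree V E r \<longleftrightarrow> out_tree V E r \<and>
     (\<forall>i. \<forall>u\<in>level E r i. \<forall>v\<in>level E r i. out_degree E u = out_degree E v)"

text \<open>(V,E) is a subgraph of (V',E') up to isomorphism: an injective vertex map
sending vertices into V' and edges onto edges of E'.\<close>
definition subgraph_emb :: "('a \<Rightarrow> 'b) \<Rightarrow> 'a set \<Rightarrow> ('a \<times> 'a) set \<Rightarrow> 'b set \<Rightarrow> ('b \<times> 'b) set \<Rightarrow> bool" where
  "subgraph_emb f V E V' E' \<longleftrightarrow> inj_on f V \<and> f ` V \<subseteq> V' \<and>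
     (\<forall>u v. (u, v) \<in> E \<longrightarrow> (f u, f v) \<in> E')"

end

theory Submission
  imports Defs "HOL-Library.Countable"
begin

definition LV :: "nat \<Rightarrow> (nat \<Rightarrow> nat) \<Rightarrow> nat list set" where
  "LV h d = {xs. length xs \<le> h \<and> (\<forall>j<length xs. xs!j < d j)}"
definition LE :: "nat \<Rightarrow> (nat \<Rightarrow> nat) \<Rightarrow> (nat list \<times> nat list) set" where
  "LE h d = {(xs, xs@[c]) | xs c. xs \<in> LV h d \<and> length xs < h \<and> c < d (length xs)}"

lemma LV_snoc: "xs @ [c] \<in> LV h d \<longleftrightarrow> xs \<in> LV h d \<and> length xs < h \<and> c < d (length xs)"
  by (auto simp: LV_def nth_append less_Suc_eq split: if_splits)

lemma LV_Nil[simp]: "[] \<in> LV h d" by (simp add: LV_def)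

lemma LE_iff: "(xs, ys) \<in> LE h d \<longleftrightarrow> (\<exists>c. ys = xs @ [c] \<and> xs @ [c] \<in> LV h d)"
  by (auto simp: LE_def LV_snoc)

lemma LV_sub: "LV h d \<subseteq> {xs. set xs \<subseteq> {..<Max (d ` {..<h})+1} \<and> length xs \<le> h}"
proof
  fix xs assume "xs \<in> LV h d"
  hence a: "length xs \<le> h" "\<forall>j<length xs. xs!j < d j" by (auto simp: LV_def)
  have "set xs \<subseteq> {..<Max (d ` {..<h})+1}"
  proof
    fix x assume "x \<in> set xs"
    then obtain j where j: "j < length xs" "xs!j = x" by (auto simp: in_set_conv_nth)
    have "d j \<le> Max (d ` {..<h})" using j a by (intro Max_ge) auto
    moreover have "x < d j" using j a by auto
    ultimately show "x \<in> {..<Max (d ` {..<h})+1}" by (simp add: less_Suc_eq_le)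
  qed
  thus "xs \<in> {xs. set xs \<subseteq> {..<Max (d ` {..<h})+1} \<and> length xs \<le> h}" using a by auto
qed

lemma finite_LV: "finite (LV h d)"
  by (rule finite_subset[OF LV_sub finite_lists_length_le]) auto

lemma LE_level: "([], ys) \<in> LE h d ^^ i \<longleftrightarrow> ys \<in> LV h d \<and> length ys = i"
proof (induction i arbitrary: ys)
  case 0 then show ?case by auto
next
  case (Suc i)
  show ?case
  proof
    assume "([], ys) \<in> LE h d ^^ Suc i"
    then obtain xs where "([], xs) \<in> LE h d ^^ i" "(xs, ys) \<in> LE h d" by auto
    thus "ys \<in> LV h d \<and> length ys = Suc i" using Suc by (auto simp: LE_iff)
  next
    assume a: "ys \<in> LV h d \<and> length ys = Suc i"
    then obtain xs c where ys: "ys = xs @ [c]" by (metis length_Suc_conv_rev)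
    have "xs \<in> LV h d" "length xs = i" using a ys by (auto simp: LV_snoc)
    hence "([], xs) \<in> LE h d ^^ i" using Suc by auto
    moreover have "(xs, ys) \<in> LE h d" using a ys by (auto simp: LE_iff)
    ultimately show "([], ys) \<in> LE h d ^^ Suc i" by auto
  qed
qed

lemma LE_children: "{w. (xs, w) \<in> LE h d} = (if xs \<in> LV h d \<and> length xs < h then (\<lambda>c. xs @ [c]) ` {..<d (length xs)} else {})"
  by (auto simp: LE_iff LV_snoc)

lemma LE_deg: "out_degree (LE h d) xs = (if xs \<in> LV h d \<and> length xs < h then d (length xs) else 0)"
  unfolding out_degree_def LE_children by (simp add: card_image inj_on_def)

lemma LT_out_tree: "out_tree (LV h d) (LE h d) []"
  unfolding out_tree_def
proof (intro conjI ballI allI impI)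
  show "finite (LV h d)" by (rule finite_LV)
  show "[] \<in> LV h d" by simp
  show "LE h d \<subseteq> LV h d \<times> LV h d" by (auto simp: LE_iff LV_snoc)
  fix u show "(u, []) \<notin> LE h d" by (auto simp: LE_iff)
next
  fix v assume "v \<in> LV h d" "v \<noteq> []"
  then obtain xs c where v: "v = xs @ [c]" by (metis rev_exhaust)
  show "\<exists>!u. (u, v) \<in> LE h d"
    using \<open>v \<in> LV h d\<close> v by (auto simp: LE_iff)
next
  fix v assume "v \<in> LV h d"
  hence "([], v) \<in> LE h d ^^ length v" by (simp add: LE_level)
  thus "([], v) \<in> (LE h d)\<^sup>*" by (metis relpow_imp_rtrancl)
qed

lemma LT_sym: "symmetric_out_tree (LV h d) (LE h d) []"
  unfolding symmetric_out_tree_def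
  by (auto simp: LT_out_tree level_def LE_level LE_deg)

definition S :: "(nat \<Rightarrow> nat) \<Rightarrow> nat \<Rightarrow> nat list set" where
  "S d i = {xs. length xs = i \<and> (\<forall>j<i. xs!j < d j)}"

lemma card_S: "card (S d i) = (\<Prod>j<i. d j)"
proof (induction i)
  case 0
  have "S d 0 = {[]}" by (auto simp: S_def)
  then show ?case by simp
next
  case (Suc i)
  have eq: "S d (Suc i) = (\<lambda>(xs, c). xs @ [c]) ` (S d i \<times> {..<d i})"
  proof
    show "S d (Suc i) \<subseteq> (\<lambda>(xs, c). xs @ [c]) ` (S d i \<times> {..<d i})"
    proof
      fix ys assume a: "ys \<in> S d (Suc i)"
      then obtain xs c where ys: "ys = xs @ [c]" unfolding S_def by (metis (mono_tags, lifting) length_Suc_conv_rev mem_Collect_eq)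
      have "xs \<in> S d i" "c < d i" using a ys by (auto simp: S_def nth_append less_Suc_eq split: if_splits)
      thus "ys \<in> (\<lambda>(xs, c). xs @ [c]) ` (S d i \<times> {..<d i})" using ys by force
    qed
    show "(\<lambda>(xs, c). xs @ [c]) ` (S d i \<times> {..<d i}) \<subseteq> S d (Suc i)"
      by (auto simp: S_def nth_append less_Suc_eq)
  qed
  have "inj_on (\<lambda>(xs, c). xs @ [c]) (S d i \<times> {..<d i})" by (auto simp: inj_on_def)
  hence "card (S d (Suc i)) = card (S d i) * d i" unfolding eq by (simp add: card_image card_cartesian_product)
  thus ?case using Suc by simp
qed

lemma prod_le: fixes d :: "nat \<Rightarrow> nat" assumes "\<forall>j<h. d j \<ge> 1" "i \<le> h" shows "(\<Prod>j<i. d j) \<le> (\<Prod>j<h. d j)"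
proof -
  have eq: "{..<h} = {..<i} \<union> {i..<h}" using assms(2) by auto
  have "(\<Prod>j<h. d j) = (\<Prod>j\<in>{..<i} \<union> {i..<h}. d j)" by (subst eq) (rule refl)
  also have "\<dots> = (\<Prod>j<i. d j) * (\<Prod>j\<in>{i..<h}. d j)" by (rule prod.union_disjoint) auto
  finally have "(\<Prod>j<h. d j) = (\<Prod>j<i. d j) * (\<Prod>j\<in>{i..<h}. d j)" .
  moreover have "(\<Prod>j\<in>{i..<h}. d j) \<ge> 1" using assms(1) by (intro prod_ge_1) auto
  ultimately show ?thesis by simp
qed

lemma LV_union: "LV h d = (\<Union>i\<le>h. S d i)"
  by (auto simp: LV_def S_def)

lemma card_LV: assumes "\<forall>j<h. d j \<ge> 1" shows "card (LV h d) \<le> (h+1) * (\<Prod>j<h. d j)"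
proof -
  have "card (LV h d) \<le> (\<Sum>i\<le>h. card (S d i))" unfolding LV_union by (rule card_UN_le) simp
  also have "\<dots> \<le> (\<Sum>i\<le>h. (\<Prod>j<h. d j))" unfolding card_S using prod_le[OF assms] by (intro sum_mono) auto
  finally show ?thesis by simp
qed

lemma leaves_LV: assumes "\<forall>j<h. d j \<ge> 1" shows "card (out_leaves (LV h d) (LE h d)) \<le> (\<Prod>j<h. d j)"
proof -
  have "out_leaves (LV h d) (LE h d) \<subseteq> S d h"
  proof
    fix xs assume "xs \<in> out_leaves (LV h d) (LE h d)"
    hence a: "xs \<in> LV h d" "out_degree (LE h d) xs = 0" by (auto simp: out_leaves_def)
    have "\<not> length xs < h"
    proof
      assume "length xs < h"
      hence "d (length xs) = 0" using a by (simp add: LE_deg)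
      thus False using assms \<open>length xs < h\<close> by force
    qed
    thus "xs \<in> S d h" using a(1) by (auto simp: LV_def S_def)
  qed
  hence "card (out_leaves (LV h d) (LE h d)) \<le> card (S d h)"
  proof (rule card_mono[rotated])
    have "S d h \<subseteq> LV h d" unfolding S_def LV_def by blast
    thus "finite (S d h)" using finite_LV by (rule finite_subset)
  qed
  thus ?thesis by (simp add: card_S)
qed


primrec Fp :: "('a \<Rightarrow> 'a) \<Rightarrow> ('a \<Rightarrow> nat) \<Rightarrow> nat \<Rightarrow> 'a \<Rightarrow> nat list" where
  "Fp p ix 0 v = []"
| "Fp p ix (Suc n) v = Fp p ix n (p v) @ [ix v]"

locale otree =
  fixes V :: "'a set" and E :: "('a \<times> 'a) set" and r :: 'a
  assumes ot: "out_tree V E r"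
begin

lemma fin: "finite V" and rV: "r \<in> V" and EV: "E \<subseteq> V \<times> V" and noin: "(u, r) \<notin> E"
  and ex1: "v \<in> V \<Longrightarrow> v \<noteq> r \<Longrightarrow> \<exists>!u. (u, v) \<in> E"
  and reach: "v \<in> V \<Longrightarrow> (r, v) \<in> E\<^sup>*"
  using ot unfolding out_tree_def by auto

lemma edgeV: "(u, v) \<in> E \<Longrightarrow> u \<in> V \<and> v \<in> V" using EV by auto

lemma pow_V: "(r, v) \<in> E ^^ n \<Longrightarrow> v \<in> V"
  using rV by (cases n) (auto dest: edgeV)

lemma pow_uniq: "(r, v) \<in> E ^^ n \<Longrightarrow> (r, v) \<in> E ^^ m \<Longrightarrow> n = m"
proof (induction n arbitrary: v m)
  case 0
  hence "v = r" by simp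
  show ?case
  proof (cases m)
    case (Suc m')
    then obtain y where "(y, v) \<in> E" using 0 by auto
    thus ?thesis using \<open>v = r\<close> noin by auto
  qed simp
next
  case (Suc n)
  then obtain u where u: "(r, u) \<in> E ^^ n" "(u, v) \<in> E" by auto
  have vr: "v \<noteq> r" using u noin by auto
  show ?case
  proof (cases m)
    case 0 thus ?thesis using Suc vr by simp
  next
    case (Suc m')
    then obtain u' where u': "(r, u') \<in> E ^^ m'" "(u', v) \<in> E" using Suc.prems by auto
    have "v \<in> V" using u edgeV by auto
    hence "u = u'" using ex1[OF _ vr] u u' by blast
    thus ?thesis using Suc.IH u u' Suc by auto
  qed
qed

definition dep :: "'a \<Rightarrow> nat" where "dep v = (THE n. (r, v) \<in> E ^^ n)"

lemma dep_eq: "(r, v) \<in> E ^^ n \<Longrightarrow> dep v = n"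
  unfolding dep_def by (rule the_equality) (auto intro: pow_uniq)

lemma dep: "v \<in> V \<Longrightarrow> (r, v) \<in> E ^^ dep v"
proof -
  assume "v \<in> V"
  then obtain n where "(r, v) \<in> E ^^ n" using reach rtrancl_power by blast
  thus ?thesis using dep_eq by simp
qed

lemma dep_r: "dep r = 0" by (rule dep_eq) simp

lemma dep0: "v \<in> V \<Longrightarrow> dep v = 0 \<Longrightarrow> v = r" using dep by fastforce

definition par :: "'a \<Rightarrow> 'a" where "par v = (THE u. (u, v) \<in> E)"

lemma par_eq: "(u, v) \<in> E \<Longrightarrow> par v = u"
proof -
  assume e: "(u, v) \<in> E"
  have "v \<in> V" "v \<noteq> r" using e edgeV noin by auto
  thus ?thesis unfolding par_def using ex1 e by blast
qed

lemma par_edge: "v \<in> V \<Longrightarrow> v \<noteq> r \<Longrightarrow> (par v, v) \<in> E"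
  using ex1 par_eq by blast

lemma edge_dep: "(u, v) \<in> E \<Longrightarrow> dep v = Suc (dep u)"
proof -
  assume e: "(u, v) \<in> E"
  hence "(r, u) \<in> E ^^ dep u" using dep edgeV by auto
  hence "(r, v) \<in> E ^^ Suc (dep u)" using e by auto
  thus ?thesis by (rule dep_eq)
qed

definition h :: nat where "h = Max (dep ` V)"

lemma dep_le_h: "v \<in> V \<Longrightarrow> dep v \<le> h"
  unfolding h_def using fin by auto

lemma levels_ne: "k \<le> h \<Longrightarrow> \<exists>u\<in>V. dep u = k"
proof -
  assume k: "k \<le> h"
  have "h \<in> dep ` V" unfolding h_def using fin rV by (intro Max_in) auto
  then obtain v where v: "v \<in> V" "dep v = h" by auto
  have "(r, v) \<in> E ^^ (k + (h - k))" using dep[OF v(1)] v k by simp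
  then obtain u where "(r, u) \<in> E ^^ k" unfolding relpow_add by auto
  thus ?thesis using pow_V dep_eq by blast
qed

lemma h_card: "h + 1 \<le> card V"
proof -
  have "{..h} \<subseteq> dep ` V" using levels_ne by force
  hence "card {..h} \<le> card (dep ` V)" using fin by (intro card_mono) auto
  also have "\<dots> \<le> card V" using fin by (rule card_image_le)
  finally show ?thesis by simp
qed

definition ch :: "'a \<Rightarrow> 'a set" where "ch u = {w. (u, w) \<in> E}"

lemma fin_ch: "finite (ch u)"
  by (rule finite_subset[OF _ fin]) (auto simp: ch_def dest: edgeV)

lemma deg_ch: "out_degree E u = card (ch u)" by (simp add: out_degree_def ch_def)

lemma card_E: "card E = card V - 1"
proof -
  have "bij_betw snd E (V - {r})"
    unfolding bij_betw_def
  proof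
    show "inj_on snd E"
    proof (rule inj_onI)
      fix x y assume "x \<in> E" "y \<in> E" "snd x = snd y"
      thus "x = y" using par_eq by (metis prod.collapse)
    qed
    show "snd ` E = V - {r}"
    proof
      show "snd ` E \<subseteq> V - {r}" using edgeV noin by force
      show "V - {r} \<subseteq> snd ` E" using par_edge by force
    qed
  qed
  hence "card E = card (V - {r})" by (rule bij_betw_same_card)
  thus ?thesis using rV fin by simp
qed

lemma sum_deg: "(\<Sum>v\<in>V. out_degree E v) = card V - 1"
proof -
  have "E = Sigma V ch" using EV by (auto simp: ch_def)
  moreover have "card (Sigma V ch) = (\<Sum>v\<in>V. card (ch v))" using fin fin_ch by (intro card_SigmaI) auto
  ultimately have "card E = (\<Sum>v\<in>V. card (ch v))" by simp
  thus ?thesis using card_E deg_ch by simp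
qed

lemma leaves_eq: "card (out_leaves V E) = (\<Sum>v\<in>V. out_degree E v - 1) + 1"
proof -
  have pt: "\<And>v. out_degree E v + (if out_degree E v = 0 then 1 else 0) = (out_degree E v - 1) + 1"
    by auto
  have "(\<Sum>v\<in>V. if out_degree E v = 0 then 1 else (0::nat)) = card (out_leaves V E)"
    using fin by (simp add: sum.If_cases out_leaves_def Int_def conj_commute)
  moreover have "(\<Sum>v\<in>V. out_degree E v + (if out_degree E v = 0 then 1 else 0)) = (\<Sum>v\<in>V. (out_degree E v - 1) + 1)"
    using pt by simp
  moreover have "(\<Sum>v\<in>V. (out_degree E v - 1) + 1) = (\<Sum>v\<in>V. out_degree E v - 1) + card V"
    by (subst sum.distrib) simp
  moreover have "(\<Sum>v\<in>V. out_degree E v + (if out_degree E v = 0 then 1 else 0)) = card V - 1 + (\<Sum>v\<in>V. if out_degree E v = 0 then 1 else (0::nat))"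
    by (subst sum.distrib) (simp add: sum_deg)
  ultimately have "card V - 1 + card (out_leaves V E) = (\<Sum>v\<in>V. out_degree E v - 1) + card V"
    by simp
  moreover have "card V \<ge> 1" using fin rV by (metis One_nat_def Suc_leI card_gt_0_iff empty_iff)
  ultimately show ?thesis by simp
qed

end

context otree begin

definition Lv :: "nat \<Rightarrow> 'a set" where "Lv j = {v\<in>V. dep v = j}"
definition D :: "nat \<Rightarrow> nat" where "D j = Max (out_degree E ` Lv j)"
definition dd :: "nat \<Rightarrow> nat" where "dd j = max 1 (D j)"

lemma fin_Lv: "finite (Lv j)" using fin by (simp add: Lv_def)

lemma deg_le_D: "v \<in> V \<Longrightarrow> out_degree E v \<le> D (dep v)"
  unfolding D_def using fin_Lv by (intro Max_ge) (auto simp: Lv_def)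

lemma dd_ge: "dd j \<ge> 1" by (simp add: dd_def)

definition w :: "nat \<Rightarrow> 'a" where "w j = (SOME v. v \<in> Lv j \<and> out_degree E v = D j)"

lemma w: "j \<le> h \<Longrightarrow> w j \<in> Lv j \<and> out_degree E (w j) = D j"
proof -
  assume "j \<le> h"
  then have ne: "Lv j \<noteq> {}" using levels_ne by (auto simp: Lv_def)
  have "D j \<in> out_degree E ` Lv j" unfolding D_def using fin_Lv ne by (intro Max_in) auto
  hence "\<exists>v. v \<in> Lv j \<and> out_degree E v = D j" by auto
  thus ?thesis unfolding w_def by (rule someI_ex)
qed

lemma sum_dd: "(\<Sum>j<h. dd j - 1) \<le> card (out_leaves V E) - 1"
proof -
  have "(\<Sum>j<h. dd j - 1) = (\<Sum>j<h. out_degree E (w j) - 1)"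
    using w by (intro sum.cong) (auto simp: dd_def)
  also have "\<dots> = (\<Sum>v\<in>w ` {..<h}. out_degree E v - 1)"
  proof (rule sum.reindex[symmetric, unfolded comp_def])
    show "inj_on w {..<h}"
    proof (rule inj_onI)
      fix i j assume "i \<in> {..<h}" "j \<in> {..<h}" "w i = w j"
      thus "i = j" using w[of i] w[of j] by (auto simp: Lv_def)
    qed
  qed
  also have "\<dots> \<le> (\<Sum>v\<in>V. out_degree E v - 1)"
    using w fin by (intro sum_mono2) (auto simp: Lv_def)
  also have "\<dots> = card (out_leaves V E) - 1" using leaves_eq by simp
  finally show ?thesis .
qed

lemma pow2: "(n::nat) \<ge> 1 \<Longrightarrow> n \<le> 2 ^ (n - 1)"
proof -
  assume n: "n \<ge> 1"
  have "n - 1 < 2 ^ (n - 1)" by (rule less_exp)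
  thus ?thesis using n by linarith
qed

lemma prod_dd: "(\<Prod>j<h. dd j) \<le> card (out_leaves V E) ^ card (out_leaves V E)"
proof -
  define l where "l = card (out_leaves V E)"
  have l1: "l \<ge> 1" using leaves_eq by (simp add: l_def)
  have "(\<Prod>j<h. dd j) \<le> (\<Prod>j<h. 2 ^ (dd j - 1))"
    using dd_ge pow2 by (intro prod_mono) auto
  also have "\<dots> = 2 ^ (\<Sum>j<h. dd j - 1)" by (simp add: power_sum)
  also have "\<dots> \<le> 2 ^ (l - 1)" using sum_dd by (intro power_increasing) (auto simp: l_def)
  also have "\<dots> \<le> l ^ l"
  proof (cases "l = 1")
    case True thus ?thesis by simp
  next
    case False
    hence "l \<ge> 2" using l1 by simp
    have "(2::nat) ^ (l - 1) \<le> 2 ^ l" by (intro power_increasing) auto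
    also have "\<dots> \<le> l ^ l" using \<open>l \<ge> 2\<close> by (intro power_mono) auto
    finally show ?thesis .
  qed
  finally show ?thesis by (simp add: l_def)
qed

definition g :: "'a \<Rightarrow> 'a \<Rightarrow> nat" where "g u = (SOME g. bij_betw g (ch u) {0..<card (ch u)})"

lemma g_bij: "bij_betw (g u) (ch u) {0..<card (ch u)}"
  unfolding g_def using someI_ex[OF ex_bij_betw_finite_nat[OF fin_ch[of u]]] .

definition ix :: "'a \<Rightarrow> nat" where "ix v = g (par v) v"

definition f :: "'a \<Rightarrow> nat list" where "f v = Fp par ix (dep v) v"

lemma len_Fp: "length (Fp p i n v) = n" by (induction n arbitrary: v) auto

lemma Fp_bound: "v \<in> V \<Longrightarrow> dep v = n \<Longrightarrow> \<forall>j<n. Fp par ix n v ! j < dd j"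
proof (induction n arbitrary: v)
  case 0 thus ?case by simp
next
  case (Suc n)
  have vr: "v \<noteq> r" using Suc dep_r by auto
  define p where "p = par v"
  have e: "(p, v) \<in> E" using par_edge[OF Suc.prems(1) vr] by (simp add: p_def)
  have pV: "p \<in> V" and dp: "dep p = n" using e edgeV edge_dep[OF e] Suc.prems by auto
  have IH: "\<forall>j<n. Fp par ix n p ! j < dd j" using Suc.IH pV dp by blast
  have "v \<in> ch p" using e by (simp add: ch_def)
  hence "g p v < card (ch p)" using g_bij[of p] by (auto simp: bij_betw_def)
  also have "\<dots> = out_degree E p" by (simp add: deg_ch)
  also have "\<dots> \<le> D n" using deg_le_D[OF pV] dp by simp
  also have "\<dots> \<le> dd n" by (simp add: dd_def)
  finally have last: "ix v < dd n" by (simp add: ix_def p_def)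
  show ?case
  proof (intro allI impI)
    fix j assume "j < Suc n"
    thus "Fp par ix (Suc n) v ! j < dd j"
      using IH last by (auto simp: nth_append len_Fp p_def[symmetric] less_Suc_eq)
  qed
qed

lemma f_LV: "v \<in> V \<Longrightarrow> f v \<in> LV h dd"
  unfolding f_def LV_def using Fp_bound dep_le_h by (auto simp: len_Fp)

lemma f_edge: "(u, v) \<in> E \<Longrightarrow> f v = f u @ [g u v]"
  unfolding f_def using edge_dep par_eq by (simp add: ix_def)

lemma f_LE: "(u, v) \<in> E \<Longrightarrow> (f u, f v) \<in> LE h dd"
  unfolding LE_iff using f_edge f_LV edgeV by metis

lemma Fp_inj: "u \<in> V \<Longrightarrow> v \<in> V \<Longrightarrow> dep u = n \<Longrightarrow> dep v = n \<Longrightarrow> Fp par ix n u = Fp par ix n v \<Longrightarrow> u = v"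
proof (induction n arbitrary: u v)
  case 0 thus ?case using dep0 by auto
next
  case (Suc n)
  have ur: "u \<noteq> r" "v \<noteq> r" using Suc dep_r by auto
  have eu: "(par u, u) \<in> E" and ev: "(par v, v) \<in> E" using par_edge Suc.prems ur by auto
  have pu: "par u \<in> V" "dep (par u) = n" using eu edgeV edge_dep[OF eu] Suc.prems by auto
  have pv: "par v \<in> V" "dep (par v) = n" using ev edgeV edge_dep[OF ev] Suc.prems by auto
  have eqs: "Fp par ix n (par u) = Fp par ix n (par v)" "ix u = ix v" using Suc.prems(5) by auto
  have pe: "par u = par v" using Suc.IH[OF pu(1) pv(1) pu(2) pv(2) eqs(1)] .
  have "u \<in> ch (par u)" "v \<in> ch (par u)" using eu ev pe by (auto simp: ch_def)
  moreover have "g (par u) u = g (par u) v" using eqs(2) pe by (simp add: ix_def)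
  ultimately show ?case using g_bij[of "par u"] by (auto simp: bij_betw_def inj_on_def)
qed

lemma f_inj: "inj_on f V"
proof (rule inj_onI)
  fix u v assume a: "u \<in> V" "v \<in> V" "f u = f v"
  hence "dep u = dep v" using len_Fp unfolding f_def by metis
  thus "u = v" using Fp_inj[OF a(1,2) refl] a unfolding f_def by metis
qed

end


lemma tr_edge: "inj \<phi> \<Longrightarrow> (\<phi> a, \<phi> b) \<in> map_prod \<phi> \<phi> ` R \<longleftrightarrow> (a, b) \<in> R"
  by (auto simp: inj_eq)

lemma tr_pow: assumes "inj \<phi>"
  shows "(\<phi> a, y) \<in> (map_prod \<phi> \<phi> ` R) ^^ n \<longleftrightarrow> (\<exists>b. y = \<phi> b \<and> (a, b) \<in> R ^^ n)"
proof (induction n arbitrary: y)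
  case 0 thus ?case by auto
next
  case (Suc n)
  show ?case
  proof
    assume "(\<phi> a, y) \<in> (map_prod \<phi> \<phi> ` R) ^^ Suc n"
    then obtain z where z: "(\<phi> a, z) \<in> (map_prod \<phi> \<phi> ` R) ^^ n" "(z, y) \<in> map_prod \<phi> \<phi> ` R" by auto
    obtain b' where b': "z = \<phi> b'" "(a, b') \<in> R ^^ n" using z(1) Suc by auto
    obtain c b where cb: "z = \<phi> c" "y = \<phi> b" "(c, b) \<in> R" using z(2) by auto
    have "c = b'" using cb b' assms by (auto simp: inj_eq)
    thus "\<exists>b. y = \<phi> b \<and> (a, b) \<in> R ^^ Suc n" using cb b' by auto
  next
    assume "\<exists>b. y = \<phi> b \<and> (a, b) \<in> R ^^ Suc n"
    then obtain b c where bc: "y = \<phi> b" "(a, c) \<in> R ^^ n" "(c, b) \<in> R" by auto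
    have "(\<phi> a, \<phi> c) \<in> (map_prod \<phi> \<phi> ` R) ^^ n" using Suc bc by auto
    moreover have "(\<phi> c, \<phi> b) \<in> map_prod \<phi> \<phi> ` R" using bc by auto
    ultimately show "(\<phi> a, y) \<in> (map_prod \<phi> \<phi> ` R) ^^ Suc n" using bc by auto
  qed
qed

lemma tr_deg: assumes "inj \<phi>" shows "out_degree (map_prod \<phi> \<phi> ` R) (\<phi> a) = out_degree R a"
proof -
  have "{w. (\<phi> a, w) \<in> map_prod \<phi> \<phi> ` R} = \<phi> ` {w. (a, w) \<in> R}"
    using assms by (auto simp: inj_eq)
  thus ?thesis unfolding out_degree_def
    by (simp add: card_image inj_on_subset[OF assms subset_UNIV])
qed

lemma tr_level: "inj \<phi> \<Longrightarrow> level (map_prod \<phi> \<phi> ` R) (\<phi> r) i = \<phi> ` level R r i"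
proof -
  assume i: "inj \<phi>"
  show ?thesis unfolding level_def
  proof (intro set_eqI iffI)
    fix y assume "y \<in> {v. (\<phi> r, v) \<in> (map_prod \<phi> \<phi> ` R) ^^ i}"
    thus "y \<in> \<phi> ` {v. (r, v) \<in> R ^^ i}" using tr_pow[OF i] by blast
  next
    fix y assume "y \<in> \<phi> ` {v. (r, v) \<in> R ^^ i}"
    thus "y \<in> {v. (\<phi> r, v) \<in> (map_prod \<phi> \<phi> ` R) ^^ i}" using tr_pow[OF i] by blast
  qed
qed

lemma tr_tree: assumes inj: "inj \<phi>" and ot: "out_tree V R r"
  shows "out_tree (\<phi> ` V) (map_prod \<phi> \<phi> ` R) (\<phi> r)"
proof -
  have ot': "finite V \<and> r \<in> V \<and> R \<subseteq> V \<times> V \<and> (\<forall>u. (u, r) \<notin> R) \<and>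
     (\<forall>v\<in>V. v \<noteq> r \<longrightarrow> (\<exists>!u. (u, v) \<in> R)) \<and> (\<forall>v\<in>V. (r, v) \<in> R\<^sup>*)"
    using ot unfolding out_tree_def .
  have a1: "finite V" using ot' by (elim conjE)
  have a2: "r \<in> V" using ot' by (elim conjE)
  have a3: "R \<subseteq> V \<times> V" using ot' by (elim conjE)
  have a4': "\<forall>u. (u, r) \<notin> R" using ot' by (elim conjE)
  have a5': "\<forall>v\<in>V. v \<noteq> r \<longrightarrow> (\<exists>!u. (u, v) \<in> R)" using ot' by (elim conjE)
  have a6': "\<forall>v\<in>V. (r, v) \<in> R\<^sup>*" using ot' by (elim conjE)
  have a4: "(u, r) \<notin> R" for u using a4' by (rule spec)
  have a5: "\<exists>!u. (u, v) \<in> R" if "v \<in> V" "v \<noteq> r" for v using bspec[OF a5' that(1)] that(2) by (rule mp)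
  have a6: "(r, v) \<in> R\<^sup>*" if "v \<in> V" for v using a6' that by (rule bspec)
  have b4: "(u, \<phi> r) \<notin> map_prod \<phi> \<phi> ` R" for u
  proof
    assume "(u, \<phi> r) \<in> map_prod \<phi> \<phi> ` R"
    then obtain c b where cb1: "(c, b) \<in> R" and cb2: "\<phi> b = \<phi> r" by auto
    from cb2 have "b = r" by (rule injD[OF inj])
    thus False using a4 \<open>(c, b) \<in> R\<close> by simp
  qed
  have b5: "\<exists>!u. (u, v) \<in> map_prod \<phi> \<phi> ` R" if v: "v \<in> \<phi> ` V" "v \<noteq> \<phi> r" for v
  proof -
    obtain b where b: "v = \<phi> b" "b \<in> V" using v(1) by (rule imageE)
    have "b \<noteq> r" using b(1) v(2) by blast
    hence "\<exists>!u. (u, b) \<in> R" by (rule a5[OF b(2)])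
    then obtain c where c: "(c, b) \<in> R" "\<forall>c'. (c', b) \<in> R \<longrightarrow> c' = c" by (erule ex1E)
    show ?thesis
    proof (rule ex1I[of _ "\<phi> c"])
      show "(\<phi> c, v) \<in> map_prod \<phi> \<phi> ` R" unfolding b(1) by (rule rev_image_eqI[OF c(1)]) simp
      fix u assume "(u, v) \<in> map_prod \<phi> \<phi> ` R"
      then obtain c' b' where cb: "u = \<phi> c'" "v = \<phi> b'" "(c', b') \<in> R" by auto
      have "\<phi> b' = \<phi> b" using cb b by simp
      hence "b' = b" by (rule injD[OF inj])
      hence "(c', b) \<in> R" using cb(3) by simp
      hence "c' = c" using c(2) by blast
      thus "u = \<phi> c" using cb(1) by simp
    qed
  qed
  have b6: "(\<phi> r, v) \<in> (map_prod \<phi> \<phi> ` R)\<^sup>*" if v: "v \<in> \<phi> ` V" for v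
  proof -
    obtain b where b: "v = \<phi> b" "b \<in> V" using v by auto
    from a6[OF b(2)] obtain n where "(r, b) \<in> R ^^ n" unfolding rtrancl_power by (rule exE)
    hence "(\<phi> r, v) \<in> (map_prod \<phi> \<phi> ` R) ^^ n" using tr_pow[OF inj] b by auto
    thus ?thesis by (rule relpow_imp_rtrancl)
  qed
  have b3: "map_prod \<phi> \<phi> ` R \<subseteq> \<phi> ` V \<times> \<phi> ` V" using a3 by auto
  show ?thesis unfolding out_tree_def
  proof (intro conjI)
    show "finite (\<phi> ` V)" using a1 by simp
    show "\<phi> r \<in> \<phi> ` V" using a2 by simp
    show "map_prod \<phi> \<phi> ` R \<subseteq> \<phi> ` V \<times> \<phi> ` V" by (rule b3)
    show "\<forall>u. (u, \<phi> r) \<notin> map_prod \<phi> \<phi> ` R" using b4 by (intro allI)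
    show "\<forall>v\<in>\<phi> ` V. v \<noteq> \<phi> r \<longrightarrow> (\<exists>!u. (u, v) \<in> map_prod \<phi> \<phi> ` R)" using b5 by (intro ballI impI)
    show "\<forall>v\<in>\<phi> ` V. (\<phi> r, v) \<in> (map_prod \<phi> \<phi> ` R)\<^sup>*" using b6 by (intro ballI)
  qed
qed

lemma tr_sym: assumes inj: "inj \<phi>" and st: "symmetric_out_tree V R r"
  shows "symmetric_out_tree (\<phi> ` V) (map_prod \<phi> \<phi> ` R) (\<phi> r)"
proof -
  have ot: "out_tree V R r" using st unfolding symmetric_out_tree_def by (rule conjunct1)
  have sy: "\<forall>i. \<forall>u\<in>level R r i. \<forall>v\<in>level R r i. out_degree R u = out_degree R v"
    using st unfolding symmetric_out_tree_def by (rule conjunct2)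
  show ?thesis unfolding symmetric_out_tree_def
  proof (intro conjI allI ballI)
    show "out_tree (\<phi> ` V) (map_prod \<phi> \<phi> ` R) (\<phi> r)" by (rule tr_tree[OF inj ot])
    fix i u v assume u: "u \<in> level (map_prod \<phi> \<phi> ` R) (\<phi> r) i" and v: "v \<in> level (map_prod \<phi> \<phi> ` R) (\<phi> r) i"
    from u obtain a where a: "u = \<phi> a" "a \<in> level R r i" unfolding tr_level[OF inj] by (rule imageE)
    from v obtain b where b: "v = \<phi> b" "b \<in> level R r i" unfolding tr_level[OF inj] by (rule imageE)
    have "out_degree R a = out_degree R b" using bspec[OF bspec[OF spec[OF sy, of i] a(2)] b(2)] .
    thus "out_degree (map_prod \<phi> \<phi> ` R) u = out_degree (map_prod \<phi> \<phi> ` R) v"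
      unfolding a(1) b(1) tr_deg[OF inj] .
  qed
qed

lemma tr_leaves: assumes inj: "inj \<phi>"
  shows "out_leaves (\<phi> ` V) (map_prod \<phi> \<phi> ` R) = \<phi> ` out_leaves V R"
proof (intro set_eqI iffI)
  fix x assume "x \<in> out_leaves (\<phi> ` V) (map_prod \<phi> \<phi> ` R)"
  then obtain a where "x = \<phi> a" "a \<in> V" "out_degree (map_prod \<phi> \<phi> ` R) (\<phi> a) = 0"
    unfolding out_leaves_def by blast
  thus "x \<in> \<phi> ` out_leaves V R" unfolding tr_deg[OF inj] out_leaves_def by blast
next
  fix x assume "x \<in> \<phi> ` out_leaves V R"
  then obtain a where "x = \<phi> a" "a \<in> V" "out_degree R a = 0"
    unfolding out_leaves_def by blast
  thus "x \<in> out_leaves (\<phi> ` V) (map_prod \<phi> \<phi> ` R)" unfolding out_leaves_def using tr_deg[OF inj, of R a] by auto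
qed

theorem mainTheorem18:
  fixes V :: "'a set" and E :: "('a \<times> 'a) set" and r :: 'a and l :: nat
  assumes "out_tree V E r"
    and "l = card (out_leaves V E)"
  shows "\<exists>(V' :: nat set) E' r' f. symmetric_out_tree V' E' r' \<and> subgraph_emb f V E V' E' \<and>
           card (out_leaves V' E') \<le> l ^ l \<and> card V' \<le> l ^ l * card V"
proof -
  interpret otree V E r using assms(1) by unfold_locales
  define \<phi> where "\<phi> = (to_nat :: nat list \<Rightarrow> nat)"
  have inj: "inj \<phi>" by (simp add: \<phi>_def)
  have ij: "inj_on \<phi> A" for A using inj inj_on_subset by blast
  have d1: "\<forall>j<h. dd j \<ge> 1" using dd_ge by auto
  have P: "(\<Prod>j<h. dd j) \<le> l ^ l" using prod_dd assms(2) by simp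
  have "symmetric_out_tree (\<phi> ` LV h dd) (map_prod \<phi> \<phi> ` LE h dd) (\<phi> [])"
    using tr_sym[OF inj LT_sym] .
  moreover have "subgraph_emb (\<phi> \<circ> f) V E (\<phi> ` LV h dd) (map_prod \<phi> \<phi> ` LE h dd)"
    unfolding subgraph_emb_def
  proof (intro conjI allI impI)
    show "inj_on (\<phi> \<circ> f) V" using f_inj ij by (rule comp_inj_on)
    show "(\<phi> \<circ> f) ` V \<subseteq> \<phi> ` LV h dd" using f_LV by auto
    fix u v assume "(u, v) \<in> E"
    thus "((\<phi> \<circ> f) u, (\<phi> \<circ> f) v) \<in> map_prod \<phi> \<phi> ` LE h dd" using f_LE by auto
  qed
  moreover have "card (out_leaves (\<phi> ` LV h dd) (map_prod \<phi> \<phi> ` LE h dd)) \<le> l ^ l"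
  proof -
    have "card (out_leaves (\<phi> ` LV h dd) (map_prod \<phi> \<phi> ` LE h dd)) = card (out_leaves (LV h dd) (LE h dd))"
      by (simp add: tr_leaves[OF inj] card_image ij)
    also have "\<dots> \<le> (\<Prod>j<h. dd j)" by (rule leaves_LV[OF d1])
    finally show ?thesis using P by linarith
  qed
  moreover have "card (\<phi> ` LV h dd) \<le> l ^ l * card V"
  proof -
    have "card (\<phi> ` LV h dd) = card (LV h dd)" by (simp add: card_image ij)
    also have "\<dots> \<le> (h + 1) * (\<Prod>j<h. dd j)" by (rule card_LV[OF d1])
    also have "\<dots> \<le> card V * l ^ l" using h_card P by (intro mult_mono) auto
    finally show ?thesis by (simp add: mult.commute)
  qed
  ultimately show ?thesis
    apply (intro exI[of _ "\<phi> ` LV h dd"] exI[of _ "map_prod \<phi> \<phi> ` LE h dd"] exI[of _ "\<phi> []"] exI[of _ "\<phi> \<circ> f"])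
    apply (intro conjI)
    apply assumption+
    done
qed

end
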